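(* Let $M \geq 1$ be an integer and let $V = (\mathbb{Z}/2\mathbb{Z})^{F(M)}$. Then there are vectors $\xi_1,\dots,\xi_M \in V$ such that every subset of $\{\xi_1,\dots,\xi_M\}$ consisting of at least $95$ percent of them (i.e. of at least $0.95M$ of the indices) spans $V$.
   Context: For a positive integer $M$, $F(M) = M$ if $M \leq 19$ and $F(M) = \lfloor M/4 \rfloor$ if $M \geq 20$. *)

theory Defs
  imports Main "HOL-Library.Z2"
begin

definition F :: "nat \<Rightarrow> nat" where
  "F M = (if M \<le> 19 then M else M div 4)"

text \<open>Vectors of V = (Z/2Z)^n are represented by their coordinate functions
  nat \<Rightarrow> bit, only coordinates j < n being relevant.\<close>
definition spans_F2 :: "nat \<Rightarrow> (nat \<Rightarrow> nat \<Rightarrow> bit) \<Rightarrow> nat set \<Rightarrow> bool" where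
  "spans_F2 n xi I \<longleftrightarrow>
     (\<forall>v :: nat \<Rightarrow> bit. \<exists>c :: nat \<Rightarrow> bit. \<forall>j<n. v j = (\<Sum>i\<in>I. c i * xi i j))"

end

theory Submission
  imports Defs
begin

lemma bit_cases_all: "(x::bit) = 0 \<or> x = 1" by (cases x) auto

lemma dual:
  assumes "finite I"
  shows "spans_F2 n xi I \<or> (\<exists>y. (\<exists>j<n. y j \<noteq> 0) \<and> (\<forall>i\<in>I. (\<Sum>j<n. y j * xi i j) = (0::bit)))"
  using assms
proof (induction n arbitrary: xi I)
  case 0
  then show ?case by (simp add: spans_F2_def)
next
  case (Suc n)
  show ?case
  proof (cases "\<forall>i\<in>I. xi i n = 0")
    case True
    define y :: "nat \<Rightarrow> bit" where "y j = (if j = n then 1 else 0)" for j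
    have "\<forall>i\<in>I. (\<Sum>j<Suc n. y j * xi i j) = 0"
      using True by (simp add: y_def)
    moreover have "y n \<noteq> 0" by (simp add: y_def)
    ultimately show ?thesis by blast
  next
    case False
    then obtain s0 where s0: "s0 \<in> I" "xi s0 n = 1" by auto
    define xi' where "xi' i j = xi i j + xi i n * xi s0 j" for i j
    have fin': "finite (I - {s0})" using Suc.prems by simp
    from Suc.IH[OF fin', of xi'] show ?thesis
    proof
      assume sp: "spans_F2 n xi' (I - {s0})"
      have "spans_F2 (Suc n) xi I"
        unfolding spans_F2_def
      proof
        fix v :: "nat \<Rightarrow> bit"
        define w where "w j = v j + v n * xi s0 j" for j
        obtain c' where c': "\<forall>j<n. w j = (\<Sum>i\<in>I - {s0}. c' i * xi' i j)"
          using sp unfolding spans_F2_def by blast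
        define T where "T = (\<Sum>i\<in>I - {s0}. c' i * xi i n)"
        define c where "c = c'(s0 := v n + T)"
        have split: "(\<Sum>i\<in>I. c i * xi i j) = c s0 * xi s0 j + (\<Sum>i\<in>I - {s0}. c' i * xi i j)" for j
        proof -
          have "(\<Sum>i\<in>I. c i * xi i j) = c s0 * xi s0 j + (\<Sum>i\<in>I - {s0}. c i * xi i j)"
            using Suc.prems s0(1) by (rule sum.remove)
          also have "(\<Sum>i\<in>I - {s0}. c i * xi i j) = (\<Sum>i\<in>I - {s0}. c' i * xi i j)"
            by (rule sum.cong) (auto simp: c_def)
          finally show ?thesis .
        qed
        have exp: "(\<Sum>i\<in>I - {s0}. c' i * xi' i j) = (\<Sum>i\<in>I - {s0}. c' i * xi i j) + T * xi s0 j" for j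
          unfolding xi'_def T_def
          by (simp only: distrib_left sum.distrib sum_distrib_right mult.assoc)
        have "\<forall>j<Suc n. v j = (\<Sum>i\<in>I. c i * xi i j)"
        proof (intro allI impI)
          fix j assume j: "j < Suc n"
          show "v j = (\<Sum>i\<in>I. c i * xi i j)"
          proof (cases "j = n")
            case True
            have "(\<Sum>i\<in>I - {s0}. c' i * xi i j) = T" using True by (simp add: T_def)
            then show ?thesis using True s0(2) split[of j]
              by (cases "v n"; cases T) (simp_all add: c_def)
          next
            case False
            with j have "j < n" by simp
            with c' exp[of j] have e: "w j = (\<Sum>i\<in>I - {s0}. c' i * xi i j) + T * xi s0 j" by simp
            show ?thesis using split[of j] e unfolding w_def c_def
              by (cases "v n"; cases T; cases "xi s0 j"; cases "v j"; cases "(\<Sum>i\<in>I - {s0}. c' i * xi i j)") simp_all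
          qed
        qed
        then show "\<exists>c. \<forall>j<Suc n. v j = (\<Sum>i\<in>I. c i * xi i j)" by blast
      qed
      then show ?thesis by blast
    next
      assume "\<exists>y. (\<exists>j<n. y j \<noteq> 0) \<and> (\<forall>i\<in>I - {s0}. (\<Sum>j<n. y j * xi' i j) = 0)"
      then obtain y' where y1: "\<exists>j<n. y' j \<noteq> 0" and y2: "\<forall>i\<in>I - {s0}. (\<Sum>j<n. y' j * xi' i j) = 0"
        by blast
      define t where "t = (\<Sum>j<n. y' j * xi s0 j)"
      define y where "y = y'(n := t)"
      have sy: "(\<Sum>j<Suc n. y j * xi i j) = (\<Sum>j<n. y' j * xi i j) + t * xi i n" for i
      proof -
        have "(\<Sum>j<n. y j * xi i j) = (\<Sum>j<n. y' j * xi i j)"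
          by (rule sum.cong) (auto simp: y_def)
        then show ?thesis by (simp add: y_def)
      qed
      have "\<forall>i\<in>I. (\<Sum>j<Suc n. y j * xi i j) = 0"
      proof
        fix i assume i: "i \<in> I"
        show "(\<Sum>j<Suc n. y j * xi i j) = 0"
        proof (cases "i = s0")
          case True
          then show ?thesis using sy[of i] s0(2) unfolding t_def
            by (cases "(\<Sum>j<n. y' j * xi s0 j)") simp_all
        next
          case False
          have "(\<Sum>j<n. y' j * xi' i j) = (\<Sum>j<n. y' j * xi i j) + xi i n * t"
            unfolding xi'_def t_def
            by (simp only: distrib_left sum.distrib sum_distrib_left mult.assoc mult.left_commute)
          with y2 i False have "(\<Sum>j<n. y' j * xi i j) + xi i n * t = 0" by simp
          then show ?thesis using sy[of i]
            by (cases "(\<Sum>j<n. y' j * xi i j)"; cases "xi i n"; cases t) simp_all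
        qed
      qed
      moreover from y1 obtain j where "j < n" "y' j \<noteq> 0" by blast
      then have "j < Suc n" "y j \<noteq> 0" by (auto simp: y_def)
      ultimately show ?thesis by blast
    qed
  qed
qed


definition code :: "nat set \<Rightarrow> (nat \<Rightarrow> nat set) \<Rightarrow> nat set \<Rightarrow> nat set" where
  "code D G Y = {i\<in>D. odd (card {j\<in>Y. i \<in> G j})}"

lemma greedy:
  fixes D :: "nat set" and d n :: nat
  assumes fD: "finite D"
    and bnd: "\<forall>k<n. 2^k * card {S. S \<subseteq> D \<and> card S \<le> d} < 2^card D"
  shows "\<exists>G. (\<forall>j. G j \<subseteq> D) \<and> (\<forall>Y \<subseteq> {..<n}. Y \<noteq> {} \<longrightarrow> d < card (code D G Y))"
  using bnd
proof (induction n)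
  case 0
  show ?case by (rule exI[of _ "\<lambda>_. {}"]) auto
next
  case (Suc n)
  then obtain G where G1: "\<forall>j. G j \<subseteq> D"
    and G2: "\<forall>Y \<subseteq> {..<n}. Y \<noteq> {} \<longrightarrow> d < card (code D G Y)" by auto
  define B where "B = {S. S \<subseteq> D \<and> card S \<le> d}"
  define C where "C = code D G ` Pow {..<n}"
  define Bad where "Bad = (\<lambda>(a, b). (a - b) \<union> (b - a)) ` (C \<times> B)"
  have fB: "finite B" using fD by (simp add: B_def)
  have fC: "finite C" by (simp add: C_def)
  have cC: "card C \<le> 2^n"
    unfolding C_def using card_image_le[of "Pow {..<n}" "code D G"] by (simp add: card_Pow)
  have "card Bad \<le> card (C \<times> B)"
    unfolding Bad_def by (rule card_image_le) (simp add: fB fC)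
  also have "\<dots> = card C * card B" by (simp add: card_cartesian_product)
  also have "\<dots> \<le> 2^n * card B" using cC by simp
  also have "\<dots> < 2^card D" using Suc.prems by (simp add: B_def)
  also have "\<dots> = card (Pow D)" using fD by (simp add: card_Pow)
  finally have lt: "card Bad < card (Pow D)" .
  have "\<not> Pow D \<subseteq> Bad"
  proof
    assume "Pow D \<subseteq> Bad"
    then have "card (Pow D) \<le> card Bad"
      by (rule card_mono[rotated]) (simp add: Bad_def fB fC)
    with lt show False by simp
  qed
  then obtain A where A: "A \<subseteq> D" "A \<notin> Bad" by blast
  define G' where "G' = G(n := A)"
  have "\<forall>j. G' j \<subseteq> D" using G1 A by (simp add: G'_def)
  moreover have "\<forall>Y \<subseteq> {..<Suc n}. Y \<noteq> {} \<longrightarrow> d < card (code D G' Y)"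
  proof (intro allI impI)
    fix Y assume Y: "Y \<subseteq> {..<Suc n}" "Y \<noteq> {}"
    show "d < card (code D G' Y)"
    proof (cases "n \<in> Y")
      case False
      then have Yn: "Y \<subseteq> {..<n}" using Y by (auto simp: less_Suc_eq)
      have "code D G' Y = code D G Y"
        unfolding code_def
      proof (rule Collect_cong)
        fix i
        have "{j\<in>Y. i \<in> G' j} = {j\<in>Y. i \<in> G j}" using False by (auto simp: G'_def)
        then show "(i \<in> D \<and> odd (card {j\<in>Y. i \<in> G' j})) = (i \<in> D \<and> odd (card {j\<in>Y. i \<in> G j}))"
          by simp
      qed
      then show ?thesis using G2 Yn Y(2) by simp
    next
      case True
      define Y0 where "Y0 = Y - {n}"
      have Y0n: "Y0 \<subseteq> {..<n}" using Y by (auto simp: Y0_def less_Suc_eq)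
      have fY0: "finite Y0" using Y0n finite_subset by blast
      have eq: "code D G' Y = (code D G Y0 - A) \<union> (A - code D G Y0)"
      proof -
        have "i \<in> code D G' Y \<longleftrightarrow> i \<in> (code D G Y0 - A) \<union> (A - code D G Y0)" for i
        proof (cases "i \<in> D")
          case iD: True
          have "{j\<in>Y. i \<in> G' j} = (if i \<in> A then insert n {j\<in>Y0. i \<in> G j} else {j\<in>Y0. i \<in> G j})"
            using True by (auto simp: G'_def Y0_def)
          moreover have "n \<notin> {j\<in>Y0. i \<in> G j}" by (simp add: Y0_def)
          moreover have "finite {j\<in>Y0. i \<in> G j}" using fY0 by simp
          ultimately show ?thesis using iD A(1) by (auto simp: code_def)
        next
          case False
          then show ?thesis using A(1) by (auto simp: code_def)
        qed
        then show ?thesis by blast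
      qed
      show ?thesis
      proof (rule ccontr)
        assume "\<not> d < card (code D G' Y)"
        then have SB: "code D G' Y \<in> B" by (auto simp: B_def code_def)
        have "code D G Y0 \<in> C" using Y0n by (simp add: C_def)
        with SB have "(\<lambda>(a, b). (a - b) \<union> (b - a)) (code D G Y0, code D G' Y) \<in> Bad"
          unfolding Bad_def by blast
        moreover have "(\<lambda>(a, b). (a - b) \<union> (b - a)) (code D G Y0, code D G' Y) = A"
          using eq by auto
        ultimately show False using A(2) by simp
      qed
    qed
  qed
  ultimately show ?case by blast
qed

lemma bit_of_nat_eq_0: "((of_nat m :: bit) = 0) \<longleftrightarrow> even m"
  by (induction m) auto

lemma card_ball:
  assumes "finite D"
  shows "card {S. S \<subseteq> D \<and> card S \<le> d} \<le> (\<Sum>i\<le>d. card D choose i)"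
proof -
  have "{S. S \<subseteq> D \<and> card S \<le> d} = (\<Union>i\<in>{..d}. {S. S \<subseteq> D \<and> card S = i})" by auto
  then have "card {S. S \<subseteq> D \<and> card S \<le> d} \<le> (\<Sum>i\<le>d. card {S. S \<subseteq> D \<and> card S = i})"
    by (simp add: card_UN_le)
  also have "\<dots> = (\<Sum>i\<le>d. card D choose i)" using n_subsets[OF assms] by simp
  finally show ?thesis .
qed

lemma numeric:
  assumes "M \<ge> 20"
  shows "2^(M div 4) * card {S. S \<subseteq> {1..M::nat} \<and> card S \<le> M div 20} < 2^M"
proof -
  define d where "d = M div 20"
  define n where "n = M div 4"
  define V where "V = card {S. S \<subseteq> {1..M::nat} \<and> card S \<le> d}"
  have dM: "d \<le> M" by (simp add: d_def)
  have "V \<le> (\<Sum>i\<le>d. M choose i)" using card_ball[of "{1..M}" d] by (simp add: V_def)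
  then have "V * 4^(M-d) \<le> (\<Sum>i\<le>d. (M choose i) * 4^(M-d))"
    by (simp add: sum_distrib_right[symmetric])
  also have "\<dots> \<le> (\<Sum>i\<le>d. (M choose i) * 1^i * 4^(M-i))"
    by (rule sum_mono) (simp add: power_increasing diff_le_mono2)
  also have "\<dots> \<le> (\<Sum>i\<le>M. (M choose i) * 1^i * 4^(M-i))"
    by (rule sum_mono2) (use dM in auto)
  also have "\<dots> = (1+4)^M" by (simp only: binomial[of 1 4 M] of_nat_id)
  finally have V5: "V * 4^(M-d) \<le> 5^M" by simp
  have "(2^(n+2*d) * 5^M :: nat)^20 = 2^(20*n+40*d) * 5^(20*M)"
    by (simp add: power_mult_distrib power_mult[symmetric] algebra_simps)
  also have "\<dots> \<le> 2^(7*M) * 5^(20*M)"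
    by (intro mult_le_mono1 power_increasing) (auto simp: n_def d_def)
  also have "\<dots> = (2^7 * 5^20)^M" by (simp only: power_mult_distrib power_mult)
  also have "\<dots> < (2^60)^M" using assms by (intro power_strict_mono) auto
  also have "\<dots> = ((8::nat)^20)^M" by simp
  also have "\<dots> = (8^M)^20" by (simp only: power_mult[symmetric] mult.commute)
  finally have "2^(n+2*d) * 5^M < (8^M::nat)"
    by (rule power_less_imp_less_base) simp
  then have "2^n * 4^d * 5^M < (8::nat)^M"
    by (simp add: power_add power_mult)
  moreover have "(8::nat)^M = 2^M * 4^(M-d) * 4^d"
    using dM by (simp add: mult.assoc power_add[symmetric] power_mult_distrib[symmetric])
  ultimately have "2^n * 5^M * 4^d < (2::nat)^M * 4^(M-d) * 4^d" by (simp add: ac_simps)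
  then have "2^n * 5^M < (2::nat)^M * 4^(M-d)" by simp
  moreover have "2^n * V * 4^(M-d) \<le> 2^n * 5^M" using V5 by (simp add: mult.assoc)
  ultimately have "2^n * V * 4^(M-d) < 2^M * 4^(M-d)" by linarith
  then have "2^n * V < 2^M" by simp
  then show ?thesis by (simp add: V_def n_def d_def)
qed


theorem lemma9p1:
  fixes M :: nat
  assumes "M \<ge> 1"
  shows "\<exists>xi :: nat \<Rightarrow> nat \<Rightarrow> bit. \<forall>I \<subseteq> {1..M}.
           20 * card I \<ge> 19 * M \<longrightarrow> spans_F2 (F M) xi I"
proof -
  define n where "n = F M"
  define d where "d = M div 20"
  define D where "D = {1..M}"
  have fD: "finite D" and cD: "card D = M" by (simp_all add: D_def)
  have bnd: "\<forall>k<n. 2^k * card {S. S \<subseteq> D \<and> card S \<le> d} < 2^card D"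
  proof (cases "M \<le> 19")
    case True
    then have "d = 0" by (simp add: d_def)
    then have "{S. S \<subseteq> D \<and> card S \<le> d} = {{}}"
    proof (intro equalityI subsetI)
      fix S assume "S \<in> {S. S \<subseteq> D \<and> card S \<le> d}" "d = 0"
      then have "S \<subseteq> D" "card S = 0" by auto
      moreover have "finite S" using \<open>S \<subseteq> D\<close> fD finite_subset by blast
      ultimately show "S \<in> {{}}" by simp
    qed auto
    moreover have "n = M" using True by (simp add: n_def F_def)
    ultimately show ?thesis using cD by simp
  next
    case False
    then have n4: "n = M div 4" by (simp add: n_def F_def)
    have "2^n * card {S. S \<subseteq> D \<and> card S \<le> d} < 2^card D"
      using numeric[of M] False by (simp add: n4 d_def D_def)
    then show ?thesis
    proof (intro allI impI)
      fix k assume "k < n"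
      then have "(2::nat)^k \<le> 2^n" by (intro power_increasing) auto
      then have "2^k * card {S. S \<subseteq> D \<and> card S \<le> d} \<le> 2^n * card {S. S \<subseteq> D \<and> card S \<le> d}"
        by (rule mult_le_mono1)
      also note \<open>2^n * card {S. S \<subseteq> D \<and> card S \<le> d} < 2^card D\<close>
      finally show "2^k * card {S. S \<subseteq> D \<and> card S \<le> d} < 2^card D" .
    qed
  qed
  obtain G where G1: "\<forall>j. G j \<subseteq> D"
    and G2: "\<forall>Y \<subseteq> {..<n}. Y \<noteq> {} \<longrightarrow> d < card (code D G Y)"
    using greedy[OF fD bnd] by blast
  define xi :: "nat \<Rightarrow> nat \<Rightarrow> bit" where "xi i j = of_bool (i \<in> G j)" for i j
  have "\<forall>I \<subseteq> {1..M}. 20 * card I \<ge> 19 * M \<longrightarrow> spans_F2 n xi I"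
  proof (intro allI impI)
    fix I assume I: "I \<subseteq> {1..M}" "20 * card I \<ge> 19 * M"
    have fI: "finite I" using I(1) finite_subset by blast
    show "spans_F2 n xi I"
    proof (rule ccontr)
      assume ns: "\<not> spans_F2 n xi I"
      then obtain y where y1: "\<exists>j<n. y j \<noteq> 0" and y2: "\<forall>i\<in>I. (\<Sum>j<n. y j * xi i j) = (0::bit)"
        using dual[OF fI, of n xi] by blast
      define Y where "Y = {j. j < n \<and> y j = 1}"
      have Yn: "Y \<subseteq> {..<n}" by (auto simp: Y_def)
      have Yne: "Y \<noteq> {}" using y1 by (auto simp: Y_def)
      have "code D G Y \<subseteq> D - I"
      proof
        fix i assume i: "i \<in> code D G Y"
        show "i \<in> D - I"
        proof
          show "i \<in> D" using i by (simp add: code_def)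
          show "i \<notin> I"
          proof
            assume iI: "i \<in> I"
            have "(\<Sum>j<n. y j * xi i j) = (\<Sum>j<n. of_bool (y j = 1 \<and> i \<in> G j))"
              by (rule sum.cong) (auto simp: xi_def)
            also have "\<dots> = of_nat (card ({..<n} \<inter> {j. y j = 1 \<and> i \<in> G j}))" by simp
            also have "{..<n} \<inter> {j. y j = 1 \<and> i \<in> G j} = {j\<in>Y. i \<in> G j}" by (auto simp: Y_def)
            finally have "(of_nat (card {j\<in>Y. i \<in> G j}) :: bit) = 0" using y2 iI by simp
            then have "even (card {j\<in>Y. i \<in> G j})" by (simp add: bit_of_nat_eq_0)
            with i show False by (simp add: code_def)
          qed
        qed
      qed
      then have "card (code D G Y) \<le> card (D - I)" using fD by (intro card_mono) auto
      also have "\<dots> = M - card I" using I(1) fI cD by (simp add: card_Diff_subset D_def)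
      also have "\<dots> \<le> d" using I(2) by (simp add: d_def)
      finally show False using G2 Yn Yne by auto
    qed
  qed
  then show ?thesis unfolding n_def by blast
qed

end
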